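(* Let $q$ be a prime power and let $n,k$ be integers with $3\le k\le n-2\le q-2$. Let $\Lambda=\{\alpha_1,\dots,\alpha_n\}\subseteq\mathbb{F}_q$ with the $\alpha_i$ pairwise distinct, and let $C_{k-1,k-2}$ be the linear code generated by the $k\times n$ matrix whose rows are $(\alpha_1^{e},\dots,\alpha_n^{e})$ for $e=0,1,\dots,k-3,k,k+1$. Then $C_{k-1,k-2}$ is MDS if and only if $$S_2(\beta_1,\dots,\beta_k)^2-S_1(\beta_1,\dots,\beta_k)S_3(\beta_1,\dots,\beta_k)\neq 0$$ for every $k$-element subset $\{\beta_1,\dots,\beta_k\}\subseteq\Lambda$ (with the $\beta_i$ distinct).
   Context: Convention: $0^0=1$. $S_t(x_1,\dots,x_m)=\sum_{t_1+\dots+t_m=t,\ t_i\ge0}x_1^{t_1}\cdots x_m^{t_m}$ is the complete homogeneous symmetric polynomial of degree $t$. An $[n,k,d]$ linear code is MDS if $d=n-k+1$. *)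

theory Defs
  imports Main
begin

text \<open>Note 0^0 = 1 in Isabelle, matching the paper's convention.\<close>
definition complete_hom :: "nat \<Rightarrow> nat \<Rightarrow> (nat \<Rightarrow> 'a::comm_semiring_1) \<Rightarrow> 'a" where
  "complete_hom t m x =
     (\<Sum>e\<in>{e::nat\<Rightarrow>nat. (\<forall>i\<ge>m. e i = 0) \<and> (\<Sum>i<m. e i) = t}. \<Prod>i<m. x i ^ e i)"

text \<open>Vectors of length n are functions nat => 'a that vanish outside {0..<n}.\<close>
definition gen_code :: "nat \<Rightarrow> nat \<Rightarrow> (nat \<Rightarrow> nat \<Rightarrow> 'a::field) \<Rightarrow> (nat \<Rightarrow> 'a) set" where
  "gen_code k n G = {(\<lambda>j. if j < n then (\<Sum>i<k. c i * G i j) else 0) | c. True}"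

definition hweight :: "nat \<Rightarrow> (nat \<Rightarrow> 'a::zero) \<Rightarrow> nat" where
  "hweight n v = card {j. j < n \<and> v j \<noteq> 0}"

definition min_dist :: "nat \<Rightarrow> (nat \<Rightarrow> 'a::zero) set \<Rightarrow> nat" where
  "min_dist n C = Min {hweight n v | v. v \<in> C \<and> v \<noteq> (\<lambda>_. 0)}"

definition is_MDS :: "nat \<Rightarrow> (nat \<Rightarrow> 'a::{finite,field}) set \<Rightarrow> bool" where
  "is_MDS n C \<longleftrightarrow> (\<exists>k. card C = card (UNIV :: 'a set) ^ k \<and> (\<exists>v\<in>C. v \<noteq> (\<lambda>_. 0)) \<and>
                        min_dist n C + k = n + 1)"

definition row_exp :: "nat \<Rightarrow> nat \<Rightarrow> nat" where
  "row_exp k i = (if i \<le> k - 3 then i else i + 2)"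

definition code_C :: "nat \<Rightarrow> nat \<Rightarrow> (nat \<Rightarrow> 'a::field) \<Rightarrow> (nat \<Rightarrow> 'a) set" where
  "code_C k n \<alpha> = gen_code k n (\<lambda>i j. \<alpha> j ^ row_exp k i)"

end

theory Submission
  imports Defs "HOL-Computational_Algebra.Polynomial"
begin

definition hset :: "nat \<Rightarrow> nat \<Rightarrow> (nat \<Rightarrow> nat) set" where
  "hset t m = {e::nat\<Rightarrow>nat. (\<forall>i\<ge>m. e i = 0) \<and> (\<Sum>i<m. e i) = t}"

lemma finite_hset: "finite (hset t m)"
proof -
  have "hset t m \<subseteq> {f. \<forall>x. (x \<in> {..<m} \<longrightarrow> f x \<in> {..t}) \<and> (x \<notin> {..<m} \<longrightarrow> f x = 0)}"
  proof
    fix e assume e: "e \<in> hset t m"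
    { fix x assume "x < m"
      then have "e x \<le> (\<Sum>i<m. e i)" by (intro member_le_sum) auto
      then have "e x \<le> t" using e by (simp add: hset_def) }
    then show "e \<in> {f. \<forall>x. (x \<in> {..<m} \<longrightarrow> f x \<in> {..t}) \<and> (x \<notin> {..<m} \<longrightarrow> f x = 0)}"
      using e by (auto simp: hset_def)
  qed
  then show ?thesis by (rule finite_subset) (intro finite_set_of_finite_funs, auto)
qed

lemma complete_hom_hset: "complete_hom t m x = (\<Sum>e\<in>hset t m. \<Prod>i<m. x i ^ e i)"
  by (simp add: complete_hom_def hset_def)

lemma complete_hom_Suc:
  "complete_hom t (Suc m) x = (\<Sum>s\<le>t. complete_hom (t - s) m x * x m ^ s)"
proof -
  have "(\<Sum>s\<le>t. complete_hom (t - s) m x * x m ^ s)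
      = (\<Sum>s\<le>t. \<Sum>e\<in>hset (t-s) m. (\<Prod>i<m. x i ^ e i) * x m ^ s)"
    by (simp add: complete_hom_hset sum_distrib_right)
  also have "\<dots> = (\<Sum>p\<in>Sigma {..t} (\<lambda>s. hset (t-s) m). (\<Prod>i<m. x i ^ snd p i) * x m ^ fst p)"
    by (subst sum.Sigma) (auto simp: finite_hset split_beta)
  also have "\<dots> = (\<Sum>e\<in>hset t (Suc m). \<Prod>i<Suc m. x i ^ e i)"
  proof (rule sum.reindex_bij_witness[where i = "\<lambda>e. (e m, e(m:=0))" and j = "\<lambda>p. (snd p)(m := fst p)"])
    fix p assume p: "p \<in> Sigma {..t} (\<lambda>s. hset (t - s) m)"
    obtain s e where pe: "p = (s, e)" by (cases p)
    have "(\<Sum>i<m. (e(m := s)) i) = (\<Sum>i<m. e i)" by (intro sum.cong) auto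
    then show "(snd p)(m := fst p) \<in> hset t (Suc m)"
      using p pe by (auto simp: hset_def)
    show "(((snd p)(m := fst p)) m, ((snd p)(m := fst p))(m := 0)) = p"
      using p pe by (auto simp: hset_def fun_eq_iff)
    have "(\<Prod>i<m. x i ^ (e(m := s)) i) = (\<Prod>i<m. x i ^ e i)" by (intro prod.cong) auto
    then show "(\<Prod>i<Suc m. x i ^ ((snd p)(m := fst p)) i) = (\<Prod>i<m. x i ^ snd p i) * x m ^ fst p"
      using pe by simp
  next
    fix a assume a: "a \<in> hset t (Suc m)"
    show "(a m, a(m := 0)) \<in> Sigma {..t} (\<lambda>s. hset (t - s) m)"
      using a by (auto simp: hset_def)
    show "(snd (a m, a(m := 0)))(m := fst (a m, a(m := 0))) = a" by simp
  qed
  finally show ?thesis by (simp add: complete_hom_hset)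
qed

lemma complete_hom_0: "complete_hom t 0 x = (if t = 0 then 1 else 0)"
proof -
  have "hset t 0 = (if t = 0 then {\<lambda>_. 0} else {})" by (auto simp: hset_def)
  then show ?thesis by (simp add: complete_hom_hset)
qed

lemma complete_hom_0t: "complete_hom 0 m x = 1"
  by (induction m) (simp_all add: complete_hom_0 complete_hom_Suc)

lemma h1_Suc: "complete_hom 1 (Suc m) x = complete_hom 1 m x + x m"
  by (simp add: complete_hom_Suc complete_hom_0t)
lemma h2_Suc: "complete_hom 2 (Suc m) x = complete_hom 2 m x + complete_hom 1 m x * x m + (x m)^2"
  by (simp add: complete_hom_Suc complete_hom_0t numeral_2_eq_2 atMost_Suc algebra_simps power2_eq_square)
lemma h3_Suc: "complete_hom 3 (Suc m) x = complete_hom 3 m x + complete_hom 2 m x * x m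
   + complete_hom 1 m x * (x m)^2 + (x m)^3"
  by (simp add: complete_hom_Suc complete_hom_0t numeral_3_eq_3 numeral_2_eq_2 atMost_Suc algebra_simps)

definition Rv :: "nat \<Rightarrow> (nat \<Rightarrow> 'a::comm_ring_1) \<Rightarrow> 'a poly" where
  "Rv m x = (\<Prod>i<m. [:1, - x i:])"

definition Pl :: "nat \<Rightarrow> (nat \<Rightarrow> 'a::comm_ring_1) \<Rightarrow> 'a poly" where
  "Pl m x = (\<Prod>i<m. [:- x i, 1:])"

lemma mult_lin_rev: "p * [:1, -a:] = p + pCons 0 (smult (-a) p)" for p :: "'a::comm_ring_1 poly"
  by (simp add: mult_pCons_right)

lemma coeff_mult_lin_rev_Suc: "coeff (p * [:1, -a:]) (Suc j) = coeff p (Suc j) - a * coeff p j" for p :: "'a::comm_ring_1 poly"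
  by (simp add: mult_lin_rev)

lemma coeff_mult_lin_rev_0: "coeff (p * [:1, -a:]) 0 = coeff p 0" for p :: "'a::comm_ring_1 poly"
  by (simp add: mult_lin_rev)

lemma Rv_Suc: "Rv (Suc m) x = Rv m x * [:1, - x m:]"
  by (simp add: Rv_def)

lemma Rv_c0: "coeff (Rv m x) 0 = 1"
  by (induction m) (simp_all add: Rv_Suc coeff_mult_lin_rev_0, simp add: Rv_def)

lemma Rv_c1: "coeff (Rv m x) 1 = - complete_hom 1 m x"
proof (induction m)
  case 0 then show ?case by (simp add: Rv_def complete_hom_0)
next
  case (Suc m)
  have "coeff (Rv (Suc m) x) 1 = coeff (Rv m x) 1 - x m * coeff (Rv m x) 0"
    using coeff_mult_lin_rev_Suc[of "Rv m x" "x m" 0] by (simp add: Rv_Suc)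
  then show ?case using Suc unfolding h1_Suc Rv_c0 by simp
qed

lemma Rv_c2: "coeff (Rv m x) 2 = (complete_hom 1 m x)^2 - complete_hom 2 m x"
proof (induction m)
  case 0 then show ?case by (simp add: Rv_def complete_hom_0)
next
  case (Suc m)
  have "coeff (Rv (Suc m) x) 2 = coeff (Rv m x) 2 - x m * coeff (Rv m x) 1"
    using coeff_mult_lin_rev_Suc[of "Rv m x" "x m" 1] by (simp add: Rv_Suc numeral_2_eq_2)
  then show ?case using Suc unfolding Rv_c1 h1_Suc h2_Suc by (simp add: algebra_simps power2_eq_square)
qed

lemma Rv_c3: "coeff (Rv m x) 3 = - (complete_hom 3 m x - 2 * complete_hom 1 m x * complete_hom 2 m x + (complete_hom 1 m x)^3)"
proof (induction m)
  case 0 then show ?case by (simp add: Rv_def complete_hom_0)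
next
  case (Suc m)
  have "coeff (Rv (Suc m) x) 3 = coeff (Rv m x) 3 - x m * coeff (Rv m x) 2"
    using coeff_mult_lin_rev_Suc[of "Rv m x" "x m" 2] by (simp add: Rv_Suc numeral_3_eq_3 numeral_2_eq_2)
  then show ?case using Suc unfolding Rv_c2 h1_Suc h2_Suc h3_Suc by (simp add: algebra_simps power2_eq_square power3_eq_cube)
qed

lemma reflect_lin: "reflect_poly [:- a, 1:] = [:1, - a:]" for a :: "'a::idom"
  by (rule poly_eqI) (auto simp: coeff_reflect_poly coeff_pCons split: nat.splits)

lemma degree_Pl: "degree (Pl m (x :: nat \<Rightarrow> 'a::idom)) = m"
  unfolding Pl_def by (subst degree_prod_sum_eq) auto

lemma Pl_nz: "Pl m (x :: nat \<Rightarrow> 'a::idom) \<noteq> 0"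
  unfolding Pl_def by auto

lemma reflect_Pl: "reflect_poly (Pl m x) = Rv m (x :: nat \<Rightarrow> 'a::idom)"
  unfolding Pl_def Rv_def by (simp add: reflect_poly_prod reflect_lin)

lemma coeff_Pl: "s \<le> m \<Longrightarrow> coeff (Pl m (x :: nat \<Rightarrow> 'a::idom)) (m - s) = coeff (Rv m x) s"
  by (simp add: reflect_Pl[symmetric] coeff_reflect_poly degree_Pl)

lemma D_ident:
  fixes x :: "nat \<Rightarrow> 'a::comm_ring_1"
  shows "(coeff (Rv m x) 2)^2 - coeff (Rv m x) 1 * coeff (Rv m x) 3
     = (complete_hom 2 m x)^2 - complete_hom 1 m x * complete_hom 3 m x"
  unfolding Rv_c1 Rv_c2 Rv_c3 by (simp add: algebra_simps power2_eq_square power3_eq_cube)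


definition fpoly :: "nat \<Rightarrow> (nat \<Rightarrow> 'a) \<Rightarrow> 'a::comm_ring_1 poly" where
  "fpoly k c = (\<Sum>i<k. monom (c i) (row_exp k i))"

lemma row_exp_inj: "3 \<le> k \<Longrightarrow> inj_on (row_exp k) {..<k}"
  by (auto simp: inj_on_def row_exp_def split: if_splits)

lemma row_exp_range: "3 \<le> k \<Longrightarrow> row_exp k ` {..<k} = {..k+1} - {k-2, k-1}"
proof (intro equalityI subsetI)
  fix m assume k: "3 \<le> k" and m: "m \<in> row_exp k ` {..<k}"
  then show "m \<in> {..k+1} - {k-2, k-1}" by (auto simp: row_exp_def)
next
  fix m assume k: "3 \<le> k" and m: "m \<in> {..k+1} - {k-2, k-1}"
  show "m \<in> row_exp k ` {..<k}"
  proof (cases "m \<le> k - 3")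
    case True
    then have "row_exp k m = m" by (simp add: row_exp_def)
    moreover have "m < k" using True k by linarith
    ultimately show ?thesis by force
  next
    case False
    then have "row_exp k (m - 2) = m" "m - 2 < k" using m k by (auto simp: row_exp_def)
    then show ?thesis by force
  qed
qed

lemma coeff_fpoly_gen: "coeff (fpoly k c) m = (\<Sum>i<k. if row_exp k i = m then c i else 0)"
  by (simp add: fpoly_def coeff_sum coeff_monom)

lemma coeff_fpoly_re: "3 \<le> k \<Longrightarrow> i < k \<Longrightarrow> coeff (fpoly k c) (row_exp k i) = c i"
proof -
  assume k: "3 \<le> k" and i: "i < k"
  have "(\<Sum>i'<k. if row_exp k i' = row_exp k i then c i' else 0) = (\<Sum>i'<k. if i' = i then c i' else 0)"
    using row_exp_inj[OF k] i by (intro sum.cong) (auto simp: inj_on_def)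
  also have "\<dots> = c i" using i by simp
  finally show ?thesis by (simp add: coeff_fpoly_gen)
qed

lemma coeff_fpoly_out: "m \<notin> row_exp k ` {..<k} \<Longrightarrow> coeff (fpoly k c) m = 0"
  by (auto simp: coeff_fpoly_gen intro!: sum.neutral)

lemma coeff_fpoly_gap: "3 \<le> k \<Longrightarrow> coeff (fpoly k c) (k-2) = 0 \<and> coeff (fpoly k c) (k-1) = 0"
  by (intro conjI coeff_fpoly_out) (simp_all add: row_exp_range)

lemma degree_fpoly: "3 \<le> k \<Longrightarrow> degree (fpoly k c) \<le> k + 1"
  by (rule degree_le) (auto intro!: coeff_fpoly_out simp: row_exp_def split: if_splits)

lemma poly_fpoly: "poly (fpoly k c) x = (\<Sum>i<k. c i * x ^ row_exp k i)"
  by (simp add: fpoly_def poly_sum poly_monom)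

lemma fpoly_conv:
  assumes k: "3 \<le> k" and d: "degree f \<le> k + 1" and z: "coeff f (k-2) = 0" "coeff f (k-1) = 0"
  shows "f = fpoly k (\<lambda>i. coeff f (row_exp k i))"
proof (rule poly_eqI)
  fix m
  show "coeff f m = coeff (fpoly k (\<lambda>i. coeff f (row_exp k i))) m"
  proof (cases "m \<in> row_exp k ` {..<k}")
    case True
    then obtain i where "i < k" "m = row_exp k i" by auto
    then show ?thesis using coeff_fpoly_re[OF k, of i "\<lambda>i. coeff f (row_exp k i)"] by simp
  next
    case False
    then have "coeff f m = 0"
      using z d by (auto simp: row_exp_range[OF k] coeff_eq_0)
    then show ?thesis using False coeff_fpoly_out by metis
  qed
qed

lemma fpoly_zero: "3 \<le> k \<Longrightarrow> fpoly k c = 0 \<Longrightarrow> i < k \<Longrightarrow> c i = 0"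
  using coeff_fpoly_re[of k i c] by simp


lemma vanish_zero:
  fixes p :: "'a::idom poly"
  assumes "finite A" "degree p < card A" "\<And>x. x \<in> A \<Longrightarrow> poly p x = 0"
  shows "p = 0"
  using poly_eqI_degree[of A p 0] assms by auto

lemma poly_Pl_root: "i < m \<Longrightarrow> poly (Pl m x) (x i) = (0 :: 'a::idom)"
  unfolding Pl_def by (auto simp: poly_prod intro!: bexI[of _ i])

lemma Pl_dvd:
  fixes f :: "'a::field poly" and \<beta> :: "nat \<Rightarrow> 'a"
  assumes inj: "inj_on \<beta> {..<k}" and z: "\<And>i. i < k \<Longrightarrow> poly f (\<beta> i) = 0"
  shows "f = Pl k \<beta> * (f div Pl k \<beta>)"
proof -
  let ?P = "Pl k \<beta>"
  have r0: "f mod ?P = 0"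
  proof (rule ccontr)
    assume nz: "f mod ?P \<noteq> 0"
    then have "degree (f mod ?P) < k" using degree_mod_less[OF Pl_nz, of f k \<beta>] degree_Pl[of k \<beta>] by auto
    also have "k = card (\<beta> ` {..<k})" using card_image[OF inj] by simp
    finally have "f mod ?P = 0"
    proof (rule vanish_zero[rotated])
      fix y assume "y \<in> \<beta> ` {..<k}"
      then obtain i where i: "i < k" "y = \<beta> i" by auto
      have "f = f div ?P * ?P + f mod ?P" by (simp add: div_mult_mod_eq)
      then have "poly f y = poly (f div ?P) y * poly ?P y + poly (f mod ?P) y"
        by (metis poly_add poly_mult)
      then show "poly (f mod ?P) y = 0" using i z poly_Pl_root[of i k \<beta>] by simp
    qed simp
    with nz show False by simp
  qed
  have "f = f div ?P * ?P + f mod ?P" by (simp add: div_mult_mod_eq)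
  then show ?thesis using r0 by (simp add: mult.commute)
qed

lemma coeff_mult_lin: "coeff (P * [:b, a:]) (Suc j) = b * coeff P (Suc j) + a * coeff P j"
  for P :: "'a::comm_ring_1 poly"
  by (simp add: mult_pCons_right)

lemma deg1_eq: "degree (g :: 'a::zero poly) \<le> 1 \<Longrightarrow> g = [:coeff g 0, coeff g 1:]"
  by (rule poly_eqI) (auto simp: coeff_pCons coeff_eq_0 split: nat.splits)

lemma two_by_two:
  fixes a b c1 c2 c3 :: "'a::field"
  assumes "b * c1 + a * c2 = 0" "b * c2 + a * c3 = 0" "c2^2 - c1 * c3 \<noteq> 0"
  shows "a = 0 \<and> b = 0"
proof -
  have "b * (c2^2 - c1 * c3) = c2 * (b * c2 + a * c3) - c3 * (b * c1 + a * c2)"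
    by (simp add: algebra_simps power2_eq_square)
  moreover have "a * (c2^2 - c1 * c3) = c2 * (b * c1 + a * c2) - c1 * (b * c2 + a * c3)"
    by (simp add: algebra_simps power2_eq_square)
  ultimately show ?thesis using assms by simp
qed

lemma coeffs_Pl_g:
  fixes \<beta> :: "nat \<Rightarrow> 'a::idom"
  assumes k: "3 \<le> k"
  shows "coeff (Pl k \<beta> * [:b, a:]) (k-1) = b * coeff (Rv k \<beta>) 1 + a * coeff (Rv k \<beta>) 2"
    and "coeff (Pl k \<beta> * [:b, a:]) (k-2) = b * coeff (Rv k \<beta>) 2 + a * coeff (Rv k \<beta>) 3"
proof -
  have e1: "k - 1 = Suc (k - 2)" and e2: "k - 2 = Suc (k - 3)" using k by auto
  have c1: "coeff (Pl k \<beta>) (k-1) = coeff (Rv k \<beta>) 1" using coeff_Pl[of 1 k \<beta>] k by simp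
  have c2: "coeff (Pl k \<beta>) (k-2) = coeff (Rv k \<beta>) 2" using coeff_Pl[of 2 k \<beta>] k by simp
  have c3: "coeff (Pl k \<beta>) (k-3) = coeff (Rv k \<beta>) 3" using coeff_Pl[of 3 k \<beta>] k by simp
  show "coeff (Pl k \<beta> * [:b, a:]) (k-1) = b * coeff (Rv k \<beta>) 1 + a * coeff (Rv k \<beta>) 2"
    using coeff_mult_lin[of "Pl k \<beta>" b a "k-2"] e1 c1 c2 by simp
  show "coeff (Pl k \<beta> * [:b, a:]) (k-2) = b * coeff (Rv k \<beta>) 2 + a * coeff (Rv k \<beta>) 3"
    using coeff_mult_lin[of "Pl k \<beta>" b a "k-3"] e2 c2 c3 by simp
qed

lemma card_V: "card {c :: nat \<Rightarrow> 'a::{finite,zero}. \<forall>i\<ge>m. c i = 0} = card (UNIV :: 'a set) ^ m \<and>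
   finite {c :: nat \<Rightarrow> 'a::{finite,zero}. \<forall>i\<ge>m. c i = 0}"
proof -
  let ?L = "{xs :: 'a list. set xs \<subseteq> UNIV \<and> length xs = m}"
  let ?g = "\<lambda>xs i. if i < m then xs ! i else (0::'a)"
  have eq: "{c :: nat \<Rightarrow> 'a. \<forall>i\<ge>m. c i = 0} = ?g ` ?L"
  proof (intro equalityI subsetI)
    fix c :: "nat \<Rightarrow> 'a" assume c: "c \<in> {c. \<forall>i\<ge>m. c i = 0}"
    have "c = ?g (map c [0..<m])" using c by (auto simp: fun_eq_iff)
    then show "c \<in> ?g ` ?L" by (intro image_eqI) auto
  qed auto
  have inj: "inj_on ?g ?L"
  proof (rule inj_onI)
    fix xs ys assume xs: "xs \<in> ?L" and ys: "ys \<in> ?L" and e: "?g xs = ?g ys"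
    show "xs = ys"
    proof (rule nth_equalityI)
      show "length xs = length ys" using xs ys by simp
      fix i assume "i < length xs"
      then show "xs ! i = ys ! i" using fun_cong[OF e, of i] xs by simp
    qed
  qed
  show ?thesis unfolding eq using card_image[OF inj] card_lists_length_eq[of "UNIV::'a set" m]
    finite_lists_length_eq[of "UNIV::'a set" m] by simp
qed


theorem theorem3p4:
  fixes \<alpha> :: "nat \<Rightarrow> 'a::{finite,field}" and n k :: nat
  assumes "3 \<le> k" and "k + 2 \<le> n" and "n \<le> card (UNIV :: 'a set)"
    and "inj_on \<alpha> {..<n}"
  shows "is_MDS n (code_C k n \<alpha>) \<longleftrightarrow>
    (\<forall>\<beta>::nat \<Rightarrow> 'a. inj_on \<beta> {..<k} \<and> \<beta> ` {..<k} \<subseteq> \<alpha> ` {..<n} \<longrightarrow>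
       (complete_hom 2 k \<beta>)^2 - complete_hom 1 k \<beta> * complete_hom 3 k \<beta> \<noteq> 0)"
proof -
  note k3 = assms(1)
  define q where "q = card (UNIV :: 'a set)"
  define cw where "cw = (\<lambda>c::nat\<Rightarrow>'a. (\<lambda>j. if j < n then poly (fpoly k c) (\<alpha> j) else 0))"
  have C_eq: "code_C k n \<alpha> = range cw"
    unfolding code_C_def gen_code_def cw_def poly_fpoly by auto
  have q2: "2 \<le> q"
  proof -
    have "card {0::'a, 1} = 2" by simp
    moreover have "card {0::'a,1} \<le> q" unfolding q_def by (rule card_mono) auto
    ultimately show ?thesis by simp
  qed
  have cardA: "card (\<alpha> ` {..<n}) = n" using card_image[OF assms(4)] by simp
  have vz: "f = 0" if d: "degree f \<le> k+1" and z: "\<And>j. j < n \<Longrightarrow> poly f (\<alpha> j) = 0" for f :: "'a poly"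
    by (rule vanish_zero[of "\<alpha> ` {..<n}"]) (use d z cardA assms(2) in auto)
  have cw_diff: "\<And>c c'. cw (\<lambda>i. c i - c' i) = (\<lambda>j. cw c j - cw c' j)"
    by (auto simp: cw_def poly_fpoly fun_eq_iff sum_subtractf left_diff_distrib)
  have cw_nz: "cw c \<noteq> (\<lambda>_. 0)" if nz: "fpoly k c \<noteq> 0" for c
  proof
    assume e: "cw c = (\<lambda>_. 0)"
    have "fpoly k c = 0"
    proof (rule vz)
      show "degree (fpoly k c) \<le> k + 1" by (rule degree_fpoly[OF k3])
      fix j assume "j < n"
      then show "poly (fpoly k c) (\<alpha> j) = 0" using fun_cong[OF e, of j] by (simp add: cw_def)
    qed
    with nz show False by simp
  qed
  define V where "V m = {c :: nat \<Rightarrow> 'a. \<forall>i\<ge>m. c i = 0}" for m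
  have cardV: "card (V m) = q ^ m \<and> finite (V m)" for m unfolding V_def q_def by (rule card_V)
  have cw_restr: "cw c = cw (\<lambda>i. if i < k then c i else 0)" for c
    by (auto simp: cw_def poly_fpoly fun_eq_iff intro!: sum.cong)
  have C_eq2: "code_C k n \<alpha> = cw ` V k"
  proof -
    have "cw c \<in> cw ` V k" for c
      by (rule image_eqI[where f = cw, OF cw_restr[of c]]) (auto simp: V_def)
    then show ?thesis unfolding C_eq by auto
  qed
  have inj: "inj_on cw (V k)"
  proof (rule inj_onI)
    fix c c' assume c: "c \<in> V k" and c': "c' \<in> V k" and e: "cw c = cw c'"
    have "cw (\<lambda>i. c i - c' i) = (\<lambda>_. 0)" using cw_diff e by simp
    then have "fpoly k (\<lambda>i. c i - c' i) = 0" using cw_nz by blast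
    from fpoly_zero[OF k3 this] have lt: "\<And>i. i < k \<Longrightarrow> c i = c' i" by simp
    show "c = c'"
    proof
      fix x show "c x = c' x"
      proof (cases "x < k")
        case True then show ?thesis using lt by simp
      next
        case False then show ?thesis using c c' by (simp add: V_def)
      qed
    qed
  qed
  have cardC: "card (code_C k n \<alpha>) = q ^ k" using C_eq2 card_image[OF inj] cardV by simp
  have hw_le: "hweight n v \<le> n" for v :: "nat \<Rightarrow> 'a"
  proof -
    have "card {j. j < n \<and> v j \<noteq> 0} \<le> card {..<n}" by (rule card_mono) auto
    then show ?thesis by (simp add: hweight_def)
  qed
  have finW: "finite {hweight n v | v. v \<in> code_C k n \<alpha> \<and> v \<noteq> (\<lambda>_. 0)}"
    by (rule finite_subset[of _ "{..n}"]) (use hw_le in auto)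
  have singleton: "\<exists>w\<in>code_C k n \<alpha>. w \<noteq> (\<lambda>_. 0) \<and> hweight n w \<le> n - k + 1"
  proof -
    define proj where "proj v = (\<lambda>j. if j < k - 1 then v j else (0::'a))" for v :: "nat \<Rightarrow> 'a"
    have "proj ` code_C k n \<alpha> \<subseteq> V (k-1)" by (auto simp: proj_def V_def)
    then have "card (proj ` code_C k n \<alpha>) \<le> q ^ (k-1)" using cardV card_mono by metis
    moreover have "q ^ (k-1) < q ^ k" using q2 k3 by (intro power_strict_increasing) auto
    ultimately have "\<not> inj_on proj (code_C k n \<alpha>)" using cardC card_image by fastforce
    then obtain v v' where v: "v \<in> code_C k n \<alpha>" "v' \<in> code_C k n \<alpha>" "v \<noteq> v'" "proj v = proj v'"
      unfolding inj_on_def by blast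
    then obtain c c' where cv: "v = cw c" "v' = cw c'" using C_eq by auto
    let ?w = "cw (\<lambda>i. c i - c' i)"
    have w: "?w = (\<lambda>j. v j - v' j)" using cw_diff cv by simp
    have "?w \<in> code_C k n \<alpha>" using C_eq by simp
    moreover have "?w \<noteq> (\<lambda>_. 0)" using w v(3) by (auto simp: fun_eq_iff)
    moreover have "hweight n ?w \<le> n - k + 1"
    proof -
      have vv: "v j = v' j" if "j < k - 1" for j using fun_cong[OF v(4), of j] that by (simp add: proj_def)
      have "{j. j < n \<and> ?w j \<noteq> 0} \<subseteq> {k-1..<n}"
      proof
        fix j assume "j \<in> {j. j < n \<and> ?w j \<noteq> 0}"
        then show "j \<in> {k-1..<n}" using vv[of j] w by (cases "j < k - 1") auto
      qed
      then have "card {j. j < n \<and> ?w j \<noteq> 0} \<le> card {k-1..<n}" by (intro card_mono) auto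
      then show ?thesis using assms by (simp add: hweight_def)
    qed
    ultimately show ?thesis by blast
  qed
  show ?thesis
  proof
    assume mds: "is_MDS n (code_C k n \<alpha>)"
    then obtain k' where k': "card (code_C k n \<alpha>) = q ^ k'" "min_dist n (code_C k n \<alpha>) + k' = n + 1"
      unfolding is_MDS_def q_def by blast
    have "q ^ k' = q ^ k" using k'(1) cardC by simp
    then have "k' = k" using q2 by simp
    then have md: "min_dist n (code_C k n \<alpha>) = n + 1 - k" using k'(2) by simp
    show "\<forall>\<beta>::nat \<Rightarrow> 'a. inj_on \<beta> {..<k} \<and> \<beta> ` {..<k} \<subseteq> \<alpha> ` {..<n} \<longrightarrow>
       (complete_hom 2 k \<beta>)^2 - complete_hom 1 k \<beta> * complete_hom 3 k \<beta> \<noteq> 0"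
    proof (intro allI impI notI)
      fix \<beta> :: "nat \<Rightarrow> 'a" assume \<beta>: "inj_on \<beta> {..<k} \<and> \<beta> ` {..<k} \<subseteq> \<alpha> ` {..<n}"
        and D0: "(complete_hom 2 k \<beta>)^2 - complete_hom 1 k \<beta> * complete_hom 3 k \<beta> = 0"
      define c1 where "c1 = coeff (Rv k \<beta>) 1"
      define c2 where "c2 = coeff (Rv k \<beta>) 2"
      define c3 where "c3 = coeff (Rv k \<beta>) 3"
      have D: "c2^2 - c1*c3 = 0" using D0 D_ident[of k \<beta>] by (simp add: c1_def c2_def c3_def)
      obtain a b where ab: "b * c1 + a * c2 = 0" "b * c2 + a * c3 = 0" "a \<noteq> 0 \<or> b \<noteq> 0"
      proof (cases "c1 = 0 \<and> c2 = 0")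
        case True then show ?thesis using that[where a=0 and b=1] by simp
      next
        case False then show ?thesis using that[where a="-c1" and b=c2] D by (auto simp: algebra_simps power2_eq_square)
      qed
      let ?g = "[:b, a:]"
      let ?f = "Pl k \<beta> * ?g"
      have gnz: "?g \<noteq> 0" using ab(3) by auto
      have fnz: "?f \<noteq> 0" using gnz Pl_nz[of k \<beta>] by (simp only: mult_eq_0_iff) simp
      have degf: "degree ?f \<le> k + 1"
      proof -
        have "degree ?f \<le> degree (Pl k \<beta>) + degree ?g" by (rule degree_mult_le)
        moreover have "degree ?g \<le> 1" by (auto simp: degree_pCons_eq_if)
        ultimately show ?thesis by (simp add: degree_Pl)
      qed
      have cf: "coeff ?f (k-1) = 0" "coeff ?f (k-2) = 0"
        using coeffs_Pl_g[OF k3, of \<beta> b a] ab by (simp_all add: c1_def c2_def c3_def)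
      define c where "c i = coeff ?f (row_exp k i)" for i
      have fc: "?f = fpoly k c" unfolding c_def by (rule fpoly_conv[OF k3 degf cf(2) cf(1)])
      have vnz: "cw c \<noteq> (\<lambda>_. 0)" using cw_nz fc fnz by metis
      define J where "J = {j. j < n \<and> \<alpha> j \<in> \<beta> ` {..<k}}"
      have cardJ: "card J = k"
      proof -
        have "\<alpha> ` J = \<beta> ` {..<k}"
        proof
          show "\<alpha> ` J \<subseteq> \<beta> ` {..<k}" by (auto simp: J_def)
          show "\<beta> ` {..<k} \<subseteq> \<alpha> ` J"
          proof
            fix y assume y: "y \<in> \<beta> ` {..<k}"
            then obtain j where "j < n" "y = \<alpha> j" using \<beta> by blast
            then show "y \<in> \<alpha> ` J" using y by (auto simp: J_def)
          qed
        qed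
        moreover have "inj_on \<alpha> J" using assms(4) by (rule inj_on_subset) (auto simp: J_def)
        ultimately show ?thesis using card_image[of \<alpha> J] card_image[of \<beta> "{..<k}"] \<beta> by simp
      qed
      have "{j. j < n \<and> cw c j \<noteq> 0} \<subseteq> {..<n} - J"
      proof
        fix j assume j: "j \<in> {j. j < n \<and> cw c j \<noteq> 0}"
        show "j \<in> {..<n} - J"
        proof (rule ccontr)
          assume "j \<notin> {..<n} - J"
          then obtain i where i: "i < k" "\<alpha> j = \<beta> i" using j by (auto simp: J_def)
          have "poly (fpoly k c) (\<beta> i) = 0" unfolding fc[symmetric] using poly_Pl_root[OF i(1), of \<beta>] by simp
          then have "cw c j = 0" using j i by (simp add: cw_def)
          with j show False by simp
        qed
      qed
      then have "hweight n (cw c) \<le> card ({..<n} - J)" unfolding hweight_def by (intro card_mono) auto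
      also have "card ({..<n} - J) = n - k" using cardJ by (subst card_Diff_subset) (auto simp: J_def)
      finally have hw: "hweight n (cw c) \<le> n - k" .
      have "min_dist n (code_C k n \<alpha>) \<le> hweight n (cw c)"
        unfolding min_dist_def by (rule Min_le[OF finW]) (use vnz C_eq in auto)
      with hw md assms(2) show False by simp
    qed
  next
    assume H: "\<forall>\<beta>::nat \<Rightarrow> 'a. inj_on \<beta> {..<k} \<and> \<beta> ` {..<k} \<subseteq> \<alpha> ` {..<n} \<longrightarrow>
       (complete_hom 2 k \<beta>)^2 - complete_hom 1 k \<beta> * complete_hom 3 k \<beta> \<noteq> 0"
    have lower: "n - k + 1 \<le> hweight n v" if vC: "v \<in> code_C k n \<alpha>" and vnz: "v \<noteq> (\<lambda>_. 0)" for v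
    proof (rule ccontr)
      assume "\<not> n - k + 1 \<le> hweight n v"
      then have hwv: "hweight n v \<le> n - k" by simp
      obtain c where vc: "v = cw c" using vC C_eq by auto
      define Z where "Z = {j. j < n \<and> v j = 0}"
      have u: "{..<n} = Z \<union> {j. j < n \<and> v j \<noteq> 0}" by (auto simp: Z_def)
      have "card {..<n} = card Z + card {j. j < n \<and> v j \<noteq> 0}"
        by (subst u, rule card_Un_disjoint) (auto simp: Z_def)
      then have "n = card Z + hweight n v" unfolding hweight_def by simp
      then have "k \<le> card Z" using hwv assms(2) by simp
      then obtain Z' where Z': "Z' \<subseteq> Z" "card Z' = k" "finite Z'" by (rule obtain_subset_with_card_n)
      obtain h where h: "bij_betw h {0..<k} Z'" using ex_bij_betw_nat_finite[OF Z'(3)] Z'(2) by auto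
      define \<beta> where "\<beta> = \<alpha> \<circ> h"
      have hZ: "h i \<in> Z" if "i < k" for i using h Z'(1) that by (auto simp: bij_betw_def)
      have \<beta>inj: "inj_on \<beta> {..<k}"
      proof -
        have "inj_on h {..<k}" using h by (simp add: bij_betw_def lessThan_atLeast0)
        moreover have "inj_on \<alpha> (h ` {..<k})" using assms(4) by (rule inj_on_subset) (use hZ in \<open>auto simp: Z_def\<close>)
        ultimately show ?thesis unfolding \<beta>_def by (rule comp_inj_on)
      qed
      have \<beta>img: "\<beta> ` {..<k} \<subseteq> \<alpha> ` {..<n}" using hZ by (auto simp: \<beta>_def Z_def)
      have D: "(complete_hom 2 k \<beta>)^2 - complete_hom 1 k \<beta> * complete_hom 3 k \<beta> \<noteq> 0"
        using H \<beta>inj \<beta>img by blast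
      then have D': "(coeff (Rv k \<beta>) 2)^2 - coeff (Rv k \<beta>) 1 * coeff (Rv k \<beta>) 3 \<noteq> 0"
        using D_ident[of k \<beta>] by simp
      let ?f = "fpoly k c"
      have fnz: "?f \<noteq> 0"
      proof
        assume "?f = 0"
        then have "cw c = (\<lambda>_. 0)" by (simp add: cw_def fun_eq_iff)
        with vnz vc show False by simp
      qed
      have zero: "poly ?f (\<beta> i) = 0" if "i < k" for i
      proof -
        have "h i \<in> Z" using that by (rule hZ)
        then show "poly ?f (\<beta> i) = 0" using vc by (auto simp: Z_def cw_def \<beta>_def)
      qed
      define g where "g = ?f div Pl k \<beta>"
      have fg: "?f = Pl k \<beta> * g" unfolding g_def by (rule Pl_dvd[OF \<beta>inj zero])
      have gnz: "g \<noteq> 0" using fg fnz by auto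
      have "degree ?f = k + degree g" using fg gnz Pl_nz degree_Pl by (metis degree_mult_eq)
      then have "degree g \<le> 1" using degree_fpoly[OF k3, of c] by simp
      then have geq: "g = [:coeff g 0, coeff g 1:]" by (rule deg1_eq)
      have f2: "?f = Pl k \<beta> * [:coeff g 0, coeff g 1:]" using fg by (simp only: geq[symmetric])
      have cf: "coeff ?f (k-1) = 0" "coeff ?f (k-2) = 0" using coeff_fpoly_gap[OF k3] by auto
      have "coeff g 1 = 0 \<and> coeff g 0 = 0"
        using two_by_two[of "coeff g 0" "coeff (Rv k \<beta>) 1" "coeff g 1" "coeff (Rv k \<beta>) 2" "coeff (Rv k \<beta>) 3"]
          cf coeffs_Pl_g[OF k3, of \<beta> "coeff g 0" "coeff g 1"] D' unfolding f2[symmetric] by simp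
      then have "[:coeff g 0, coeff g 1:] = 0" by simp
      with geq gnz show False by simp
    qed
    obtain w where w: "w \<in> code_C k n \<alpha>" "w \<noteq> (\<lambda>_. 0)" "hweight n w \<le> n - k + 1" using singleton by blast
    have hw: "hweight n w = n - k + 1" using lower[OF w(1,2)] w(3) by simp
    have "min_dist n (code_C k n \<alpha>) = n - k + 1"
      unfolding min_dist_def
    proof (rule Min_eqI[OF finW])
      show "n - k + 1 \<in> {hweight n v | v. v \<in> code_C k n \<alpha> \<and> v \<noteq> (\<lambda>_. 0)}" using w hw by force
    qed (use lower in auto)
    then show "is_MDS n (code_C k n \<alpha>)" unfolding is_MDS_def
      using cardC w assms(2) q_def by (intro exI[of _ k]) auto
  qed
qed

end
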